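(* Consider the single-armed lazy restless bandit described in the context with $p_{0,0}>p_{1,0}$ (positively correlated arm), fixed subsidy $\eta$ and $\beta\in(0,1)$. Then $V(\pi)$, $V_S(\pi)$ and $V_{NS}(\pi)$ are decreasing in $\pi\in[0,1]$.
   Context: Single-armed lazy restless bandit: an arm has a hidden state in $\{0,1\}$ evolving as a two-state Markov chain with transition probabilities $p_{i,j}$ ($p_{i,0}+p_{i,1}=1$). During each session the chain makes exactly $K\ge1$ transitions. In each session the decision maker plays the arm or not. If played with the arm in state $i$ at session start, an ACK is received with probability $\rho_i\in[0,1]$ and the expected reward is $R_i$; if not played, subsidy $\eta$ is received and nothing observed. Standing assumptions: $\rho_0<\rho_1$, $R_0<R_1$. Belief $\pi\in[0,1]$ = probability of state $0$. $R_S(\pi)=\pi R_0+(1-\pi)R_1$, $\rho(\pi)=\pi\rho_0+(1-\pi)\rho_1$, $\gamma_1(\pi)=\frac{(1-\pi)\rho_1p_{1,0}+\pi\rho_0p_{0,0}}{\rho_1(1-\pi)+\rho_0\pi}$, $\gamma_0(\pi)=\frac{(1-\pi)(1-\rho_1)p_{1,0}+\pi(1-\rho_0)p_{0,0}}{(1-\rho_1)(1-\pi)+(1-\rho_0)\pi}$, $\gamma_2(\pi)=(p_{0,0}-p_{1,0})^K\pi+p_{1,0}\sum_{j=0}^{K-1}(p_{0,0}-p_{1,0})^j$. $V_S,V_{NS},V$ are the unique bounded solution of $V_S(\pi)=R_S(\pi)+\beta\big(\rho(\pi)V(\gamma_1(\pi))+(1-\rho(\pi))V(\gamma_0(\pi))\big)$,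 $V_{NS}(\pi)=\eta+\beta V(\gamma_2(\pi))$, $V(\pi)=\max\{V_S(\pi),V_{NS}(\pi)\}$ (a term with zero coefficient is taken to be $0$). *)

theory Defs
  imports "HOL-Analysis.Analysis"
begin

text \<open>Single-armed lazy restless bandit. Belief b = probability of state 0.
  Transition probabilities: p00 = p_{0,0}, p10 = p_{1,0}
  (so p_{0,1} = 1 - p00, p_{1,1} = 1 - p10).\<close>

definition R_S :: "real \<Rightarrow> real \<Rightarrow> real \<Rightarrow> real" where
  "R_S R0 R1 b = b * R0 + (1 - b) * R1"

definition rho :: "real \<Rightarrow> real \<Rightarrow> real \<Rightarrow> real" where
  "rho rho0 rho1 b = b * rho0 + (1 - b) * rho1"

definition gamma1 :: "real \<Rightarrow> real \<Rightarrow> real \<Rightarrow> real \<Rightarrow> real \<Rightarrow> real" where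
  "gamma1 p00 p10 rho0 rho1 b =
     ((1 - b) * rho1 * p10 + b * rho0 * p00) / (rho1 * (1 - b) + rho0 * b)"

definition gamma0 :: "real \<Rightarrow> real \<Rightarrow> real \<Rightarrow> real \<Rightarrow> real \<Rightarrow> real" where
  "gamma0 p00 p10 rho0 rho1 b =
     ((1 - b) * (1 - rho1) * p10 + b * (1 - rho0) * p00) /
     ((1 - rho1) * (1 - b) + (1 - rho0) * b)"

definition gamma2 :: "real \<Rightarrow> real \<Rightarrow> nat \<Rightarrow> real \<Rightarrow> real" where
  "gamma2 p00 p10 K b =
     (p00 - p10) ^ K * b + p10 * (\<Sum>j<K. (p00 - p10) ^ j)"

text \<open>A term with zero coefficient contributes 0; in HOL the
  corresponding gamma is 0/0 = 0, which lies in [0,1], and the product with the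
  zero coefficient vanishes, so the convention is respected.\<close>

definition bandit_solution ::
  "real \<Rightarrow> real \<Rightarrow> nat \<Rightarrow> real \<Rightarrow> real \<Rightarrow> real \<Rightarrow> real \<Rightarrow> real \<Rightarrow> real \<Rightarrow>
   (real \<Rightarrow> real) \<Rightarrow> (real \<Rightarrow> real) \<Rightarrow> (real \<Rightarrow> real) \<Rightarrow> bool" where
  "bandit_solution p00 p10 K rho0 rho1 R0 R1 eta beta VS VNS V \<longleftrightarrow>
     bounded (VS ` {0..1}) \<and> bounded (VNS ` {0..1}) \<and> bounded (V ` {0..1}) \<and>
     (\<forall>b\<in>{0..1}.
        VS b = R_S R0 R1 b + beta * (rho rho0 rho1 b * V (gamma1 p00 p10 rho0 rho1 b)
                 + (1 - rho rho0 rho1 b) * V (gamma0 p00 p10 rho0 rho1 b)) \<and>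
        VNS b = eta + beta * V (gamma2 p00 p10 K b) \<and>
        V b = max (VS b) (VNS b))"

end

theory Submission
  imports Defs
begin

lemma rho_le1:
  assumes "0 \<le> rho0" "rho0 < rho1" "rho1 \<le> 1" "0 \<le> b" "b \<le> 1"
  shows "0 \<le> rho rho0 rho1 b" "rho rho0 rho1 b \<le> 1"
proof -
  show "0 \<le> rho rho0 rho1 b" unfolding rho_def using assms by simp
  have "b * rho0 \<le> b * 1" "(1 - b) * rho1 \<le> (1 - b) * 1"
    using assms by (intro mult_left_mono; simp)+
  then show "rho rho0 rho1 b \<le> 1" unfolding rho_def by simp
qed

lemma rho_anti:
  assumes "rho0 < rho1" "b \<le> b'"
  shows "rho rho0 rho1 b' \<le> rho rho0 rho1 b"
proof -
  have "rho rho0 rho1 b - rho rho0 rho1 b' = (b' - b) * (rho1 - rho0)"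
    unfolding rho_def by (simp add: algebra_simps)
  moreover have "0 \<le> (b' - b) * (rho1 - rho0)" using assms by simp
  ultimately show ?thesis by simp
qed

lemma g1_eq: "gamma1 p00 p10 rho0 rho1 b =
   ((1 - b) * rho1 * p10 + b * rho0 * p00) / rho rho0 rho1 b"
  unfolding gamma1_def rho_def by (simp add: algebra_simps)

lemma g0_eq: "gamma0 p00 p10 rho0 rho1 b =
   ((1 - b) * (1 - rho1) * p10 + b * (1 - rho0) * p00) / (1 - rho rho0 rho1 b)"
  unfolding gamma0_def rho_def by (simp add: algebra_simps)

lemma g1_range:
  assumes "0 \<le> p10" "p00 \<le> 1" "p10 < p00" "0 \<le> rho0" "rho0 < rho1" "rho1 \<le> 1"
    "0 \<le> b" "b \<le> 1"
  shows "gamma1 p00 p10 rho0 rho1 b \<in> {0..1}"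
proof (cases "rho rho0 rho1 b = 0")
  case True then show ?thesis by (simp add: g1_eq)
next
  case False
  then have pos: "0 < rho rho0 rho1 b" using rho_le1[OF assms(4-8)] by simp
  have n0: "0 \<le> (1 - b) * rho1 * p10 + b * rho0 * p00"
    using assms by (intro add_nonneg_nonneg mult_nonneg_nonneg) auto
  have "(1 - b) * rho1 * p10 \<le> (1 - b) * rho1"
    using assms by (intro mult_left_le) auto
  moreover have "b * rho0 * p00 \<le> b * rho0"
    using assms by (intro mult_left_le) auto
  ultimately have "(1 - b) * rho1 * p10 + b * rho0 * p00 \<le> rho rho0 rho1 b"
    unfolding rho_def by (simp add: algebra_simps)
  then show ?thesis using pos n0 by (simp add: g1_eq divide_simps)
qed

lemma g0_range:
  assumes "0 \<le> p10" "p00 \<le> 1" "p10 < p00" "0 \<le> rho0" "rho0 < rho1" "rho1 \<le> 1"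
    "0 \<le> b" "b \<le> 1"
  shows "gamma0 p00 p10 rho0 rho1 b \<in> {0..1}"
proof (cases "1 - rho rho0 rho1 b = 0")
  case True then show ?thesis by (simp add: g0_eq)
next
  case False
  then have pos: "0 < 1 - rho rho0 rho1 b" using rho_le1[OF assms(4-8)] by simp
  have n0: "0 \<le> (1 - b) * (1 - rho1) * p10 + b * (1 - rho0) * p00"
    using assms by (intro add_nonneg_nonneg mult_nonneg_nonneg) auto
  have "(1 - b) * (1 - rho1) * p10 \<le> (1 - b) * (1 - rho1)"
    using assms by (intro mult_left_le) auto
  moreover have "b * (1 - rho0) * p00 \<le> b * (1 - rho0)"
    using assms by (intro mult_left_le) auto
  ultimately have "(1 - b) * (1 - rho1) * p10 + b * (1 - rho0) * p00 \<le> 1 - rho rho0 rho1 b"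
    unfolding rho_def by (simp add: algebra_simps)
  then show ?thesis using pos n0 by (simp add: g0_eq divide_simps)
qed

lemma g1_mono:
  assumes "0 \<le> rho0" "rho0 < rho1" "p10 \<le> p00" "b \<le> b'"
    "0 < rho rho0 rho1 b'"
  shows "gamma1 p00 p10 rho0 rho1 b \<le> gamma1 p00 p10 rho0 rho1 b'"
proof -
  have p: "0 < rho rho0 rho1 b" using rho_anti[OF assms(2,4)] assms(5) by simp
  have id: "((1 - b') * rho1 * p10 + b' * rho0 * p00) * rho rho0 rho1 b
     - ((1 - b) * rho1 * p10 + b * rho0 * p00) * rho rho0 rho1 b'
     = rho0 * rho1 * (p00 - p10) * (b' - b)"
    unfolding rho_def by (simp add: algebra_simps)
  have "0 \<le> rho0 * rho1 * (p00 - p10) * (b' - b)"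
    using assms by (intro mult_nonneg_nonneg) auto
  then have "((1 - b) * rho1 * p10 + b * rho0 * p00) * rho rho0 rho1 b'
     \<le> ((1 - b') * rho1 * p10 + b' * rho0 * p00) * rho rho0 rho1 b"
    using id by linarith
  then show ?thesis using p assms(5) by (simp add: g1_eq divide_simps)
qed

lemma g0_mono:
  assumes "rho0 < rho1" "rho1 \<le> 1" "p10 \<le> p00" "b \<le> b'"
    "0 < 1 - rho rho0 rho1 b"
  shows "gamma0 p00 p10 rho0 rho1 b \<le> gamma0 p00 p10 rho0 rho1 b'"
proof -
  have p: "0 < 1 - rho rho0 rho1 b'" using rho_anti[OF assms(1,4)] assms(5) by simp
  have id: "((1 - b') * (1 - rho1) * p10 + b' * (1 - rho0) * p00) * (1 - rho rho0 rho1 b)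
     - ((1 - b) * (1 - rho1) * p10 + b * (1 - rho0) * p00) * (1 - rho rho0 rho1 b')
     = (1 - rho0) * (1 - rho1) * (p00 - p10) * (b' - b)"
    unfolding rho_def by (simp add: algebra_simps)
  have "0 \<le> (1 - rho0) * (1 - rho1) * (p00 - p10) * (b' - b)"
    using assms by (intro mult_nonneg_nonneg) auto
  then have "((1 - b) * (1 - rho1) * p10 + b * (1 - rho0) * p00) * (1 - rho rho0 rho1 b')
     \<le> ((1 - b') * (1 - rho1) * p10 + b' * (1 - rho0) * p00) * (1 - rho rho0 rho1 b)"
    using id by linarith
  then show ?thesis using p assms(5) by (simp add: g0_eq divide_simps)
qed

lemma g1_le_g0:
  assumes "rho0 < rho1" "p10 \<le> p00" "0 \<le> b" "b \<le> 1"
    "0 < rho rho0 rho1 b" "0 < 1 - rho rho0 rho1 b"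
  shows "gamma1 p00 p10 rho0 rho1 b \<le> gamma0 p00 p10 rho0 rho1 b"
proof -
  have id: "((1 - b) * (1 - rho1) * p10 + b * (1 - rho0) * p00) * rho rho0 rho1 b
     - ((1 - b) * rho1 * p10 + b * rho0 * p00) * (1 - rho rho0 rho1 b)
     = (p00 - p10) * ((1 - b) * b * (rho1 - rho0))"
    unfolding rho_def by (simp add: algebra_simps)
  have "0 \<le> (p00 - p10) * ((1 - b) * b * (rho1 - rho0))"
    using assms by (intro mult_nonneg_nonneg) auto
  then have "((1 - b) * rho1 * p10 + b * rho0 * p00) * (1 - rho rho0 rho1 b)
     \<le> ((1 - b) * (1 - rho1) * p10 + b * (1 - rho0) * p00) * rho rho0 rho1 b"
    using id by linarith
  then show ?thesis using assms by (simp add: g0_eq g1_eq divide_simps)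
qed

lemma g2_step: "gamma2 p00 p10 (Suc K) b = gamma2 p00 p10 K (p00 * b + p10 * (1 - b))"
  unfolding gamma2_def by (simp add: algebra_simps)

lemma g2_range:
  assumes "0 \<le> p10" "p00 \<le> 1" "p10 < p00"
  shows "b \<in> {0..1} \<Longrightarrow> gamma2 p00 p10 K b \<in> {0..1}"
proof (induction K arbitrary: b)
  case 0 then show ?case by (simp add: gamma2_def)
next
  case (Suc K)
  have "p00 * b \<le> b" "p10 * (1 - b) \<le> 1 - b" using Suc.prems assms
    by (auto intro: mult_left_le_one_le mult_left_le)
  then have "p00 * b + p10 * (1 - b) \<in> {0..1}" using Suc.prems assms
    by (auto intro!: add_nonneg_nonneg mult_nonneg_nonneg) 
  then show ?case using Suc.IH g2_step by metis
qed

lemma g2_mono: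
  assumes "p10 < p00" "b \<le> b'"
  shows "gamma2 p00 p10 K b \<le> gamma2 p00 p10 K b'"
  unfolding gamma2_def using assms by (simp add: mult_left_mono)


lemma E_mono:
  assumes "0 \<le> p10" "p00 \<le> 1" "p10 < p00" "0 \<le> rho0" "rho0 < rho1" "rho1 \<le> 1"
    and W: "\<forall>u\<in>{0..1}. \<forall>v\<in>{0..1}. u \<le> v \<longrightarrow> W v \<le> W u + D"
    and "0 \<le> D" "0 \<le> x" "x \<le> y" "y \<le> 1"
  shows "rho rho0 rho1 y * W (gamma1 p00 p10 rho0 rho1 y)
           + (1 - rho rho0 rho1 y) * W (gamma0 p00 p10 rho0 rho1 y)
         \<le> rho rho0 rho1 x * W (gamma1 p00 p10 rho0 rho1 x)
           + (1 - rho rho0 rho1 x) * W (gamma0 p00 p10 rho0 rho1 x) + D"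
proof -
  define r where "r = rho rho0 rho1 x"
  define r' where "r' = rho rho0 rho1 y"
  define a1 where "a1 = gamma1 p00 p10 rho0 rho1 x"
  define a0 where "a0 = gamma0 p00 p10 rho0 rho1 x"
  define c1 where "c1 = gamma1 p00 p10 rho0 rho1 y"
  define c0 where "c0 = gamma0 p00 p10 rho0 rho1 y"
  have rr: "r' \<le> r" unfolding r_def r'_def using rho_anti assms by blast
  have r1: "0 \<le> r'" "r \<le> 1" unfolding r_def r'_def using rho_le1 assms by auto
  have rng: "a1 \<in> {0..1}" "a0 \<in> {0..1}" "c1 \<in> {0..1}" "c0 \<in> {0..1}"
    unfolding a1_def a0_def c1_def c0_def using g1_range g0_range assms by auto
  have id: "r' * W c1 + (1 - r') * W c0 - (r * W a1 + (1 - r) * W a0)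
     = r' * (W c1 - W a1) + (r - r') * (W c0 - W a1) + (1 - r) * (W c0 - W a0)"
    by (simp add: algebra_simps)
  have t1: "r' * (W c1 - W a1) \<le> r' * D"
  proof (cases "r' = 0")
    case False
    then have "a1 \<le> c1" unfolding a1_def c1_def
      using g1_mono[of rho0 rho1 p10 p00 x y] assms r1 by (simp add: r'_def)
    then have "W c1 - W a1 \<le> D" using bspec[OF bspec[OF W rng(1)] rng(3)] by simp
    then show ?thesis using r1 by (simp add: mult_left_mono)
  qed simp
  have t3: "(1 - r) * (W c0 - W a0) \<le> (1 - r) * D"
  proof (cases "1 - r = 0")
    case False
    then have "a0 \<le> c0" unfolding a0_def c0_def
      using g0_mono[of rho0 rho1 p10 p00 x y] assms r1 by (simp add: r_def)
    then have "W c0 - W a0 \<le> D" using bspec[OF bspec[OF W rng(2)] rng(4)] by simp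
    then show ?thesis using r1 by (simp add: mult_left_mono)
  qed simp
  have t2: "(r - r') * (W c0 - W a1) \<le> (r - r') * D"
  proof (cases "r = r'")
    case False
    then have rlt: "r' < r" using rr by simp
    then have xy: "x < y" using \<open>x \<le> y\<close> unfolding r_def r'_def by (cases "x = y") auto
    have "a1 \<le> c0"
    proof (cases "r < 1")
      case True
      have "0 < r" using rlt r1 by simp
      then have "a1 \<le> a0" unfolding a1_def a0_def
        using g1_le_g0[of rho0 rho1 p10 p00 x] assms True by (simp add: r_def)
      also have "a0 \<le> c0" unfolding a0_def c0_def
        using g0_mono[of rho0 rho1 p10 p00 x y] assms True by (simp add: r_def)
      finally show ?thesis .
    next
      case False
      then have "r = 1" using r1 by simp
      then have e: "x * (rho1 - rho0) = rho1 - 1" unfolding r_def rho_def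
        by (simp add: algebra_simps)
      have "0 \<le> x * (rho1 - rho0)" using assms by simp
      then have x0: "x = 0" and rho1: "rho1 = 1" using e assms by auto
      have "a1 = p10" unfolding a1_def gamma1_def using x0 assms by simp
      moreover have "c0 = p00" unfolding c0_def gamma0_def using x0 xy rho1 assms by simp
      ultimately show ?thesis using assms by simp
    qed
    then have "W c0 - W a1 \<le> D" using bspec[OF bspec[OF W rng(1)] rng(4)] by simp
    then show ?thesis using rr by (simp add: mult_left_mono)
  qed simp
  have "r' * W c1 + (1 - r') * W c0 - (r * W a1 + (1 - r) * W a0) \<le> D"
    using id t1 t2 t3 by (simp add: algebra_simps)
  then show ?thesis unfolding r_def r'_def a1_def a0_def c1_def c0_def by simp
qed

lemma step:
  assumes "0 \<le> p10" "p00 \<le> 1" "p10 < p00"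
    and "0 \<le> rho0" "rho0 < rho1" "rho1 \<le> 1"
    and "R0 < R1"
    and "0 < beta"
    and sol: "bandit_solution p00 p10 K rho0 rho1 R0 R1 eta beta VS VNS V"
    and W: "\<forall>u\<in>{0..1}. \<forall>v\<in>{0..1}. u \<le> v \<longrightarrow> V v \<le> V u + D"
    and "0 \<le> D" and xy: "x \<in> {0..1}" "y \<in> {0..1}" "x \<le> y"
  shows "VS y \<le> VS x + beta * D" "VNS y \<le> VNS x + beta * D" "V y \<le> V x + beta * D"
proof -
  have eq: "\<And>b. b \<in> {0..1} \<Longrightarrow>
        VS b = R_S R0 R1 b + beta * (rho rho0 rho1 b * V (gamma1 p00 p10 rho0 rho1 b)
                 + (1 - rho rho0 rho1 b) * V (gamma0 p00 p10 rho0 rho1 b)) \<and>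
        VNS b = eta + beta * V (gamma2 p00 p10 K b) \<and>
        V b = max (VS b) (VNS b)"
    using sol unfolding bandit_solution_def by blast
  have R: "R_S R0 R1 y \<le> R_S R0 R1 x"
  proof -
    have "R_S R0 R1 x - R_S R0 R1 y = (y - x) * (R1 - R0)"
      unfolding R_S_def by (simp add: algebra_simps)
    moreover have "0 \<le> (y - x) * (R1 - R0)" using xy assms by simp
    ultimately show ?thesis by simp
  qed
  have E: "rho rho0 rho1 y * V (gamma1 p00 p10 rho0 rho1 y)
           + (1 - rho rho0 rho1 y) * V (gamma0 p00 p10 rho0 rho1 y)
         \<le> rho rho0 rho1 x * V (gamma1 p00 p10 rho0 rho1 x)
           + (1 - rho rho0 rho1 x) * V (gamma0 p00 p10 rho0 rho1 x) + D"
    using E_mono[OF assms(1-6) W \<open>0 \<le> D\<close>] xy by auto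
  have "beta * (rho rho0 rho1 y * V (gamma1 p00 p10 rho0 rho1 y)
           + (1 - rho rho0 rho1 y) * V (gamma0 p00 p10 rho0 rho1 y))
         \<le> beta * (rho rho0 rho1 x * V (gamma1 p00 p10 rho0 rho1 x)
           + (1 - rho rho0 rho1 x) * V (gamma0 p00 p10 rho0 rho1 x) + D)"
    using E assms by (intro mult_left_mono) auto
  then show s1: "VS y \<le> VS x + beta * D" using eq[OF xy(1)] eq[OF xy(2)] R
    by (simp add: algebra_simps)
  have g2: "gamma2 p00 p10 K x \<in> {0..1}" "gamma2 p00 p10 K y \<in> {0..1}"
    "gamma2 p00 p10 K x \<le> gamma2 p00 p10 K y"
    using g2_range[OF assms(1-3)] g2_mono[OF assms(3)] xy by auto
  then have "V (gamma2 p00 p10 K y) \<le> V (gamma2 p00 p10 K x) + D" using W by blast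
  then have "beta * V (gamma2 p00 p10 K y) \<le> beta * (V (gamma2 p00 p10 K x) + D)"
    using assms by (intro mult_left_mono) auto
  then show s2: "VNS y \<le> VNS x + beta * D" using eq[OF xy(1)] eq[OF xy(2)]
    by (simp add: algebra_simps)
  show "V y \<le> V x + beta * D" using eq[OF xy(1)] eq[OF xy(2)] s1 s2 by auto
qed

theorem lemma3:
  fixes p00 p10 rho0 rho1 R0 R1 eta beta :: real and K :: nat
    and VS VNS V :: "real \<Rightarrow> real"
  assumes "0 \<le> p10" "p00 \<le> 1" "p10 < p00"
    and "1 \<le> K"
    and "0 \<le> rho0" "rho0 < rho1" "rho1 \<le> 1"
    and "R0 < R1"
    and "0 < beta" "beta < 1"
    and "bandit_solution p00 p10 K rho0 rho1 R0 R1 eta beta VS VNS V"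
  shows "\<forall>x\<in>{0..1}. \<forall>y\<in>{0..1}. x \<le> y \<longrightarrow>
           V y \<le> V x \<and> VS y \<le> VS x \<and> VNS y \<le> VNS x"
proof -
  have "bounded (V ` {0..1})" using assms(11) unfolding bandit_solution_def by blast
  then obtain M where M: "\<And>x. x \<in> {0..1} \<Longrightarrow> \<bar>V x\<bar> \<le> M"
    unfolding bounded_iff by (metis image_eqI real_norm_def)
  define S where "S = {V y - V x | x y. x \<in> {0..1::real} \<and> y \<in> {0..1} \<and> x \<le> y}"
  have bdd: "bdd_above S" unfolding S_def bdd_above_def
  proof (intro exI[of _ "2 * M"] ballI)
    fix z assume "z \<in> {V y - V x | x y. x \<in> {0..1::real} \<and> y \<in> {0..1} \<and> x \<le> y}"
    then obtain x y where "z = V y - V x" "x \<in> {0..1}" "y \<in> {0..1}" by blast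
    then show "z \<le> 2 * M" using M[of x] M[of y] by auto
  qed
  have ne: "0 \<in> S" unfolding S_def by force
  define D where "D = Sup S"
  have up: "\<And>z. z \<in> S \<Longrightarrow> z \<le> D" unfolding D_def using bdd by (rule cSup_upper[rotated])
  have D0: "0 \<le> D" using up ne by blast
  have W: "\<forall>u\<in>{0..1}. \<forall>v\<in>{0..1}. u \<le> v \<longrightarrow> V v \<le> V u + D"
  proof (intro ballI impI)
    fix u v :: real assume "u \<in> {0..1}" "v \<in> {0..1}" "u \<le> v"
    then have "V v - V u \<in> S" unfolding S_def by blast
    then show "V v \<le> V u + D" using up by fastforce
  qed
  have "D \<le> beta * D" unfolding D_def
  proof (rule cSup_least)
    show "S \<noteq> {}" using ne by blast
    fix z assume "z \<in> S"
    then obtain x y where "z = V y - V x" "x \<in> {0..1}" "y \<in> {0..1}" "x \<le> y"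
      unfolding S_def by blast
    then show "z \<le> beta * Sup S"
      using step(3)[OF assms(1-3,5-9,11) W D0] unfolding D_def by fastforce
  qed
  then have "(1 - beta) * D \<le> 0" by (simp add: algebra_simps)
  moreover have "0 < 1 - beta" using assms(10) by simp
  ultimately have "D \<le> 0" by (simp add: mult_le_0_iff)
  then have "D = 0" using D0 by simp
  then have W0: "\<forall>u\<in>{0..1}. \<forall>v\<in>{0..1}. u \<le> v \<longrightarrow> V v \<le> V u + 0" using W by simp
  show ?thesis
    using step[OF assms(1-3,5-9,11) W0] by auto
qed

end
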